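(* Let $\mathcal{L}$ be an abstract logic with the weak isomorphism property, let $\tau$ be a vocabulary and let $T \subseteq \mathcal{L}(\tau)$ be a theory. If $T$ has a model $\mathfrak{A}$ of cardinality $\lambda$, then for every cardinal $\kappa > \lambda$ there exist a model $\mathfrak{B}$ of $T$ of cardinality $\kappa$ and a surjective strict homomorphism from $\mathfrak{B}$ onto $\mathfrak{A}$ (and hence a weak isomorphism between $\mathfrak{B}$ and $\mathfrak{A}$).
   Context: Vocabularies may contain relation, function and constant symbols. An abstract logic $\mathcal{L}$ assigns to each vocabulary $\tau$ a set of sentences $\mathcal{L}(\tau)$ and a satisfaction relation between $\tau$-structures and these sentences, satisfying the basic closure properties of abstract logics in the sense of Barwise–Feferman (isomorphism, reduct/expansion, renaming, closure under Boolean connectives, etc.), where the atom property is taken with respect to first-order logic without identity $\mathcal{L}^-_{\omega\omega}$ (i.e. atomic formulas are those not involving $=$); the relativization property is not required. A strict homomorphism from $\mathfrak{B}$ to $\mathfrak{A}$ is a map $h\colon B\to A$ such that for every $n$-ary relation symbol $P$ and $b_1,\dots,b_n\in B$: $P^{\mathfrak{B}}(b_1,\dots,b_n)$ iff $P^{\mathfrak{A}}(h(b_1),\dots,h(b_n))$; for every function symbol $f$: $h(f^{\mathfrak{B}}(b_1,\dots,b_n)) = f^{\mathfrak{A}}(h(b_1),\dots,h(b_n))$; and $h(c^{\mathfrak{B}})=c^{\mathfrak{A}}$ for constants $c$. A weak isomorphism (relativeness correspondence) between $\tau$-structures $\mathfrak{A}$ and $\mathfrak{B}$ is a relation $R\subseteq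 A\times B$ with domain all of $A$ and range all of $B$ such that whenever $a_iRb_i$ for $i=1,\dots,n$: $P^{\mathfrak{A}}(a_1,\dots,a_n)$ iff $P^{\mathfrak{B}}(b_1,\dots,b_n)$ for each $n$-ary relation symbol $P$, $f^{\mathfrak{A}}(a_1,\dots,a_n)\,R\,f^{\mathfrak{B}}(b_1,\dots,b_n)$ for each $n$-ary function symbol $f$, and $c^{\mathfrak{A}} R c^{\mathfrak{B}}$ for each constant $c$. We write $\mathfrak{A}\sim\mathfrak{B}$ if such an $R$ exists. $\mathcal{L}$ has the weak isomorphism property if $\mathfrak{A}\sim\mathfrak{B}$ implies that $\mathfrak{A}$ and $\mathfrak{B}$ satisfy the same $\mathcal{L}$-sentences. *)

theory Defs
  imports Main
begin

record ('r, 'f) vocab =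
  rarity :: "'r \<Rightarrow> nat"
  farity :: "'f \<Rightarrow> nat"

text \<open>A structure with universe elements of type 'u. Only the values on
tuples from the universe of the right length are meaningful.\<close>

record ('u, 'r, 'f, 'c) struc =
  univ :: "'u set"
  rel  :: "'r \<Rightarrow> 'u list \<Rightarrow> bool"
  fn   :: "'f \<Rightarrow> 'u list \<Rightarrow> 'u"
  cn   :: "'c \<Rightarrow> 'u"

definition is_struct :: "('r, 'f) vocab \<Rightarrow> ('u, 'r, 'f, 'c) struc \<Rightarrow> bool" where
  "is_struct \<tau> M \<longleftrightarrow>
     univ M \<noteq> {} \<and>
     (\<forall>f xs. length xs = farity \<tau> f \<and> set xs \<subseteq> univ M \<longrightarrow> fn M f xs \<in> univ M) \<and>
     (\<forall>c. cn M c \<in> univ M)"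

definition strict_hom ::
  "('r, 'f) vocab \<Rightarrow> ('u \<Rightarrow> 'v) \<Rightarrow> ('u, 'r, 'f, 'c) struc \<Rightarrow> ('v, 'r, 'f, 'c) struc \<Rightarrow> bool" where
  "strict_hom \<tau> h B A \<longleftrightarrow>
     (\<forall>x\<in>univ B. h x \<in> univ A) \<and>
     (\<forall>P bs. length bs = rarity \<tau> P \<and> set bs \<subseteq> univ B \<longrightarrow>
              (rel B P bs \<longleftrightarrow> rel A P (map h bs))) \<and>
     (\<forall>f bs. length bs = farity \<tau> f \<and> set bs \<subseteq> univ B \<longrightarrow>
              h (fn B f bs) = fn A f (map h bs)) \<and>
     (\<forall>c. h (cn B c) = cn A c)"

definition weak_iso ::
  "('r, 'f) vocab \<Rightarrow> ('u \<times> 'v) set \<Rightarrow> ('u, 'r, 'f, 'c) struc \<Rightarrow> ('v, 'r, 'f, 'c) struc \<Rightarrow> bool" where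
  "weak_iso \<tau> R A B \<longleftrightarrow>
     R \<subseteq> univ A \<times> univ B \<and> Domain R = univ A \<and> Range R = univ B \<and>
     (\<forall>P as bs. length as = rarity \<tau> P \<and> list_all2 (\<lambda>a b. (a, b) \<in> R) as bs \<longrightarrow>
                (rel A P as \<longleftrightarrow> rel B P bs)) \<and>
     (\<forall>f as bs. length as = farity \<tau> f \<and> list_all2 (\<lambda>a b. (a, b) \<in> R) as bs \<longrightarrow>
                (fn A f as, fn B f bs) \<in> R) \<and>
     (\<forall>c. (cn A c, cn B c) \<in> R)"

definition weakly_iso ::
  "('r, 'f) vocab \<Rightarrow> ('u, 'r, 'f, 'c) struc \<Rightarrow> ('v, 'r, 'f, 'c) struc \<Rightarrow> bool" where
  "weakly_iso \<tau> A B \<longleftrightarrow> (\<exists>R. weak_iso \<tau> R A B)"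

definition isomorphism ::
  "('r, 'f) vocab \<Rightarrow> ('u \<Rightarrow> 'v) \<Rightarrow> ('u, 'r, 'f, 'c) struc \<Rightarrow> ('v, 'r, 'f, 'c) struc \<Rightarrow> bool" where
  "isomorphism \<tau> h A B \<longleftrightarrow> strict_hom \<tau> h A B \<and> bij_betw h (univ A) (univ B)"

text \<open>We record the closure properties that make sense for a single vocabulary:
isomorphism invariance and closure under negation and conjunction.\<close>

definition abstract_logic ::
  "('r, 'f) vocab \<Rightarrow> 's set \<Rightarrow> (('u, 'r, 'f, 'c) struc \<Rightarrow> 's \<Rightarrow> bool) \<Rightarrow> bool" where
  "abstract_logic \<tau> L sat \<longleftrightarrow>
     (\<forall>A B h \<phi>. is_struct \<tau> A \<and> is_struct \<tau> B \<and> isomorphism \<tau> h A B \<and> \<phi> \<in> L \<longrightarrow>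
                 (sat A \<phi> \<longleftrightarrow> sat B \<phi>)) \<and>
     (\<forall>\<phi>\<in>L. \<exists>\<psi>\<in>L. \<forall>A. is_struct \<tau> A \<longrightarrow> (sat A \<psi> \<longleftrightarrow> \<not> sat A \<phi>)) \<and>
     (\<forall>\<phi>\<in>L. \<forall>\<chi>\<in>L. \<exists>\<psi>\<in>L. \<forall>A. is_struct \<tau> A \<longrightarrow> (sat A \<psi> \<longleftrightarrow> sat A \<phi> \<and> sat A \<chi>))"

definition weak_iso_property ::
  "('r, 'f) vocab \<Rightarrow> 's set \<Rightarrow> (('u, 'r, 'f, 'c) struc \<Rightarrow> 's \<Rightarrow> bool) \<Rightarrow> bool" where
  "weak_iso_property \<tau> L sat \<longleftrightarrow>
     (\<forall>A B. is_struct \<tau> A \<and> is_struct \<tau> B \<and> weakly_iso \<tau> A B \<longrightarrow>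
            (\<forall>\<phi>\<in>L. sat A \<phi> \<longleftrightarrow> sat B \<phi>))"

definition is_model ::
  "('r, 'f) vocab \<Rightarrow> (('u, 'r, 'f, 'c) struc \<Rightarrow> 's \<Rightarrow> bool) \<Rightarrow> 's set \<Rightarrow> ('u, 'r, 'f, 'c) struc \<Rightarrow> bool" where
  "is_model \<tau> sat T A \<longleftrightarrow> is_struct \<tau> A \<and> (\<forall>\<phi>\<in>T. sat A \<phi>)"

end

theory Submission
  imports Defs
begin

theorem lemma3:
  fixes \<tau> :: "('r, 'f) vocab"
    and L T :: "'s set"
    and sat :: "('u, 'r, 'f, 'c) struc \<Rightarrow> 's \<Rightarrow> bool"
    and A :: "('u, 'r, 'f, 'c) struc"
    and K :: "'u set"
  assumes "abstract_logic \<tau> L sat"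
    and "weak_iso_property \<tau> L sat"
    and "T \<subseteq> L"
    and "is_model \<tau> sat T A"
    and "ordLess2 (card_of (univ A)) (card_of K)"
  shows "\<exists>B h. is_model \<tau> sat T B \<and> ordIso2 (card_of (univ B)) (card_of K) \<and>
           strict_hom \<tau> h B A \<and> h ` univ B = univ A \<and> weakly_iso \<tau> B A"
proof -
  have SA: "is_struct \<tau> A" using assms(4) by (simp add: is_model_def)
  have ne: "univ A \<noteq> {}" using SA by (simp add: is_struct_def)
  have "\<exists>g. g ` K = univ A"
    using card_of_ordLeq2[OF ne, of K] ordLess_imp_ordLeq[OF assms(5)] by blast
  then obtain h where hK: "h ` K = univ A" by blast
  define g where "g = (\<lambda>a. SOME k. k \<in> K \<and> h k = a)"
  have g: "g a \<in> K \<and> h (g a) = a" if "a \<in> univ A" for a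
  proof -
    have "a \<in> h ` K" using that hK by simp
    then obtain k where "k \<in> K" "h k = a" by (rule imageE) simp
    thus ?thesis unfolding g_def by (rule someI2[where Q="\<lambda>k. k \<in> K \<and> h k = a", OF conjI])
  qed
  define B :: "('u, 'r, 'f, 'c) struc" where
    "B = \<lparr>univ = K, rel = (\<lambda>P bs. rel A P (map h bs)),
          fn = (\<lambda>f bs. g (fn A f (map h bs))), cn = (\<lambda>c. g (cn A c))\<rparr>"
  have mapin: "set (map h bs) \<subseteq> univ A" if "set bs \<subseteq> K" for bs
    using that hK by auto
  have fnA: "fn A f (map h bs) \<in> univ A" if "length bs = farity \<tau> f" "set bs \<subseteq> K" for f bs
    using SA mapin[OF that(2)] that(1) unfolding is_struct_def by auto
  have cnA: "cn A c \<in> univ A" for c using SA unfolding is_struct_def by auto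
  have Kne: "K \<noteq> {}" using ne hK by auto
  have SB: "is_struct \<tau> B"
    unfolding is_struct_def B_def
    using Kne by (simp add: g fnA cnA)
  have SH: "strict_hom \<tau> h B A"
    unfolding strict_hom_def B_def
    using hK by (simp add: g fnA cnA) blast
  define R where "R = {(b, h b) | b. b \<in> K}"
  have l2: "list_all2 (\<lambda>a b. (a, b) \<in> R) as bs \<longleftrightarrow> set as \<subseteq> K \<and> bs = map h as" for as bs
  proof (induction as arbitrary: bs)
    case Nil then show ?case by auto
  next
    case (Cons a as) then show ?case
      by (cases bs) (auto simp: R_def)
  qed
  have WI: "weak_iso \<tau> R B A"
    unfolding weak_iso_def
  proof (intro conjI allI impI)
    show "R \<subseteq> univ B \<times> univ A" using hK by (auto simp: R_def B_def)
    show "Domain R = univ B" by (auto simp: R_def B_def)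
    show "Range R = univ A" by (auto simp: R_def B_def Range_iff hK[symmetric])
    show "rel B P as = rel A P bs"
      if "length as = rarity \<tau> P \<and> list_all2 (\<lambda>a b. (a, b) \<in> R) as bs" for P as bs
      using that l2 by (auto simp: B_def)
    show "(fn B f as, fn A f bs) \<in> R"
      if "length as = farity \<tau> f \<and> list_all2 (\<lambda>a b. (a, b) \<in> R) as bs" for f as bs
    proof -
      have "set as \<subseteq> K" "bs = map h as" using that l2 by auto
      thus ?thesis using that fnA[of as f] g[OF fnA[of as f]] by (auto simp: B_def R_def)
    qed
    show "(cn B c, cn A c) \<in> R" for c
      using g[OF cnA[of c]] by (auto simp: B_def R_def)
  qed
  hence wk: "weakly_iso \<tau> B A" by (auto simp: weakly_iso_def)
  have "\<forall>\<phi>\<in>L. sat B \<phi> \<longleftrightarrow> sat A \<phi>"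
    using assms(2) SB SA wk unfolding weak_iso_property_def by blast
  hence M: "is_model \<tau> sat T B"
    using assms(3,4) SB by (auto simp: is_model_def)
  have "ordIso2 (card_of (univ B)) (card_of K)" by (simp add: B_def card_of_refl)
  moreover have "h ` univ B = univ A" using hK by (simp add: B_def)
  ultimately show ?thesis using M SH wk by blast
qed

end
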